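(* Let $v\geq 7$ be an integer with $v\equiv 1$ or $7\pmod{14}$. Then $K^*_v$ has a $D_i$-decomposition for every $i\in[1,7]$.
   Context: $K^*_v$ denotes the complete symmetric digraph of order $v$: it has $v$ vertices and contains both arcs $(x,y)$ and $(y,x)$ for every pair of distinct vertices $x,y$. A $D$-decomposition of a digraph $K$ is a set of subdigraphs of $K$, each isomorphic to $D$, such that every arc of $K$ lies in exactly one of them. For distinct vertices $v_0,\dots,v_6$, the digraphs $D_i[v_0,v_1,\dots,v_6]$ ($i\in[1,7]$) all have vertex set $\{v_0,\dots,v_6\}$ and the following arc sets: $D_1$: $(v_1,v_0),(v_1,v_2),(v_2,v_3),(v_3,v_4),(v_4,v_5),(v_5,v_6),(v_6,v_0)$; $D_2$: $(v_1,v_0),(v_2,v_1),(v_2,v_3),(v_3,v_4),(v_4,v_5),(v_5,v_6),(v_6,v_0)$; $D_3$: $(v_1,v_0),(v_1,v_2),(v_3,v_2),(v_3,v_4),(v_4,v_5),(v_5,v_6),(v_6,v_0)$; $D_4$: $(v_1,v_0),(v_1,v_2),(v_2,v_3),(v_4,v_3),(v_4,v_5),(v_5,v_6),(v_6,v_0)$; $D_5$: $(v_1,v_0),(v_2,v_1),(v_3,v_2),(v_3,v_4),(v_4,v_5),(v_5,v_6),(v_6,v_0)$; $D_6$: $(v_1,v_0),(v_2,v_1),(v_2,v_3),(v_3,v_4),(v_5,v_4),(v_5,v_6),(v_6,v_0)$; $D_7$: $(v_1,v_0),(v_1,v_2),(v_3,v_2),(v_3,v_4),(v_4,v_5),(v_6,v_5),(v_6,v_0)$.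 $D_i$ also denotes the isomorphism type of $D_i[v_0,\dots,v_6]$. *)

theory Defs
  imports Main
begin

text \<open>Arcs of a digraph are ordered pairs. The complete symmetric digraph on vertex set V
  has all arcs (x,y) with x, y in V distinct. K*_v is taken on the vertex set {0..<v}.\<close>

definition complete_sym_arcs :: "'a set \<Rightarrow> ('a \<times> 'a) set" where
  "complete_sym_arcs V = {(x, y). x \<in> V \<and> y \<in> V \<and> x \<noteq> y}"

text \<open>Arc set of D_i[v_0,...,v_6], where the vertex v_j is given as u j.\<close>

fun D_arcs :: "nat \<Rightarrow> (nat \<Rightarrow> 'a) \<Rightarrow> ('a \<times> 'a) set" where
  "D_arcs i u =
    (if i = 1 then {(u 1, u 0), (u 1, u 2), (u 2, u 3), (u 3, u 4), (u 4, u 5), (u 5, u 6), (u 6, u 0)}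
     else if i = 2 then {(u 1, u 0), (u 2, u 1), (u 2, u 3), (u 3, u 4), (u 4, u 5), (u 5, u 6), (u 6, u 0)}
     else if i = 3 then {(u 1, u 0), (u 1, u 2), (u 3, u 2), (u 3, u 4), (u 4, u 5), (u 5, u 6), (u 6, u 0)}
     else if i = 4 then {(u 1, u 0), (u 1, u 2), (u 2, u 3), (u 4, u 3), (u 4, u 5), (u 5, u 6), (u 6, u 0)}
     else if i = 5 then {(u 1, u 0), (u 2, u 1), (u 3, u 2), (u 3, u 4), (u 4, u 5), (u 5, u 6), (u 6, u 0)}
     else if i = 6 then {(u 1, u 0), (u 2, u 1), (u 2, u 3), (u 3, u 4), (u 5, u 4), (u 5, u 6), (u 6, u 0)}
     else {(u 1, u 0), (u 1, u 2), (u 3, u 2), (u 3, u 4), (u 4, u 5), (u 6, u 5), (u 6, u 0)})"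

text \<open>A subdigraph of the complete symmetric digraph on V isomorphic to D_i: it is
  D_i[v_0,...,v_6] for distinct vertices v_0,...,v_6 of V (every vertex of D_i is incident
  with an arc, so the subdigraph is determined by its arc set).\<close>

definition is_D_copy :: "nat \<Rightarrow> 'a set \<Rightarrow> ('a \<times> 'a) set \<Rightarrow> bool" where
  "is_D_copy i V B \<longleftrightarrow>
     (\<exists>u. inj_on u {0..<7} \<and> u ` {0..<7} \<subseteq> V \<and> B = D_arcs i u)"

definition has_D_decomposition :: "nat \<Rightarrow> 'a set \<Rightarrow> bool" where
  "has_D_decomposition i V \<longleftrightarrow>
     (\<exists>\<B>. (\<forall>B\<in>\<B>. is_D_copy i V B) \<and>
          (\<forall>a\<in>complete_sym_arcs V. \<exists>!B. B \<in> \<B> \<and> a \<in> B))"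

end

theory Submission
  imports Defs
begin

definition patl :: "nat \<Rightarrow> (nat \<times> nat) list" where
 "patl i = (if i = 1 then [(1,0),(1,2),(2,3),(3,4),(4,5),(5,6),(6,0)]
     else if i = 2 then [(1,0),(2,1),(2,3),(3,4),(4,5),(5,6),(6,0)]
     else if i = 3 then [(1,0),(1,2),(3,2),(3,4),(4,5),(5,6),(6,0)]
     else if i = 4 then [(1,0),(1,2),(2,3),(4,3),(4,5),(5,6),(6,0)]
     else if i = 5 then [(1,0),(2,1),(3,2),(3,4),(4,5),(5,6),(6,0)]
     else if i = 6 then [(1,0),(2,1),(2,3),(3,4),(5,4),(5,6),(6,0)]
     else [(1,0),(1,2),(3,2),(3,4),(4,5),(6,5),(6,0)])"

lemma D_arcs_list: "D_arcs i u = set (map (\<lambda>(s,t). (u s, u t)) (patl i))"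
  by (simp add: patl_def)

declare D_arcs.simps[simp del]

lemma length_patl[simp]: "length (patl i) = 7"
  by (simp add: patl_def)

lemma patl_bounds: "(s,t) \<in> set (patl i) \<Longrightarrow> s < 7 \<and> t < 7 \<and> s \<noteq> t"
  by (auto simp add: patl_def split: if_splits)

definition arcsL :: "nat \<Rightarrow> nat list \<Rightarrow> (nat \<times> nat) list" where
  "arcsL i xs = map (\<lambda>(s,t). (xs ! s, xs ! t)) (patl i)"

lemma set_arcsL: "set (arcsL i xs) = D_arcs i (\<lambda>t. xs ! t)"
  by (simp only: arcsL_def D_arcs_list)

lemma length_arcsL[simp]: "length (arcsL i xs) = 7"
  by (simp add: arcsL_def)

definition tgt :: "nat \<Rightarrow> nat \<Rightarrow> (nat \<times> nat) set" where
  "tgt N H = {(a,b). a < N \<and> b < N \<and> a \<noteq> b \<and> \<not> (H \<le> a \<and> H \<le> b)}"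

lemma one_to_seven: "i \<in> {1..7::nat} \<Longrightarrow> i = 1 \<or> i = 2 \<or> i = 3 \<or> i = 4 \<or> i = 5 \<or> i = 6 \<or> i = 7"
  by auto

section \<open>Local designs\<close>

definition L7 :: "nat \<Rightarrow> nat list list" where
  "L7 i = (if i = 1 then [[2,0,6,5,3,1,4], [6,4,5,0,1,2,3], [0,1,5,6,3,2,4], [1,6,4,3,0,5,2], [5,2,6,0,4,1,3], [4,5,1,6,2,0,3]]
    else if i = 2 then [[2,0,6,5,3,1,4], [1,4,5,0,3,2,6], [1,0,3,4,6,2,5], [6,3,1,5,2,4,0], [3,2,1,0,4,5,6], [5,0,2,1,6,4,3]]
    else if i = 3 then [[2,0,6,5,3,1,4], [5,0,1,4,6,2,3], [6,2,5,1,0,4,3], [0,6,3,1,2,4,5], [4,3,0,2,1,6,5], [2,5,1,6,4,0,3]]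
    else if i = 4 then [[2,0,6,5,3,1,4], [6,5,1,2,3,0,4], [1,2,4,5,0,3,6], [3,2,5,4,6,0,1], [0,1,6,2,5,3,4], [0,2,6,3,4,1,5]]
    else if i = 5 then [[2,0,6,5,3,1,4], [5,6,3,0,4,1,2], [0,2,3,4,6,1,5], [4,6,1,2,3,0,5], [2,6,0,1,3,4,5], [1,0,4,2,6,3,5]]
    else if i = 6 then [[2,0,6,5,3,1,4], [1,5,2,6,3,4,0], [3,2,6,4,5,1,0], [2,1,3,4,6,0,5], [1,6,3,2,0,5,4], [6,5,3,0,4,2,1]]
    else [[2,0,6,5,3,4,1], [1,5,4,6,3,0,2], [1,4,0,5,2,6,3], [6,1,5,0,3,2,4], [1,0,4,2,3,5,6], [3,1,0,6,2,5,4]])"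

lemma L7_1: "distinct (concat (map (arcsL 1) (L7 1))) \<and> set (concat (map (arcsL 1) (L7 1))) \<subseteq> tgt 7 7
  \<and> length (L7 1) = 6 \<and> (\<forall>xs\<in>set (L7 1). length xs = 7 \<and> distinct xs \<and> (\<forall>x\<in>set xs. x < 7))"
  by (simp add: L7_def arcsL_def patl_def tgt_def)

lemma L7_2: "distinct (concat (map (arcsL 2) (L7 2))) \<and> set (concat (map (arcsL 2) (L7 2))) \<subseteq> tgt 7 7
  \<and> length (L7 2) = 6 \<and> (\<forall>xs\<in>set (L7 2). length xs = 7 \<and> distinct xs \<and> (\<forall>x\<in>set xs. x < 7))"
  by (simp add: L7_def arcsL_def patl_def tgt_def)

lemma L7_3: "distinct (concat (map (arcsL 3) (L7 3))) \<and> set (concat (map (arcsL 3) (L7 3))) \<subseteq> tgt 7 7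
  \<and> length (L7 3) = 6 \<and> (\<forall>xs\<in>set (L7 3). length xs = 7 \<and> distinct xs \<and> (\<forall>x\<in>set xs. x < 7))"
  by (simp add: L7_def arcsL_def patl_def tgt_def)

lemma L7_4: "distinct (concat (map (arcsL 4) (L7 4))) \<and> set (concat (map (arcsL 4) (L7 4))) \<subseteq> tgt 7 7
  \<and> length (L7 4) = 6 \<and> (\<forall>xs\<in>set (L7 4). length xs = 7 \<and> distinct xs \<and> (\<forall>x\<in>set xs. x < 7))"
  by (simp add: L7_def arcsL_def patl_def tgt_def)

lemma L7_5: "distinct (concat (map (arcsL 5) (L7 5))) \<and> set (concat (map (arcsL 5) (L7 5))) \<subseteq> tgt 7 7
  \<and> length (L7 5) = 6 \<and> (\<forall>xs\<in>set (L7 5). length xs = 7 \<and> distinct xs \<and> (\<forall>x\<in>set xs. x < 7))"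
  by (simp add: L7_def arcsL_def patl_def tgt_def)

lemma L7_6: "distinct (concat (map (arcsL 6) (L7 6))) \<and> set (concat (map (arcsL 6) (L7 6))) \<subseteq> tgt 7 7
  \<and> length (L7 6) = 6 \<and> (\<forall>xs\<in>set (L7 6). length xs = 7 \<and> distinct xs \<and> (\<forall>x\<in>set xs. x < 7))"
  by (simp add: L7_def arcsL_def patl_def tgt_def)

lemma L7_7: "distinct (concat (map (arcsL 7) (L7 7))) \<and> set (concat (map (arcsL 7) (L7 7))) \<subseteq> tgt 7 7
  \<and> length (L7 7) = 6 \<and> (\<forall>xs\<in>set (L7 7). length xs = 7 \<and> distinct xs \<and> (\<forall>x\<in>set xs. x < 7))"
  by (simp add: L7_def arcsL_def patl_def tgt_def)

lemma L7_props: assumes "i \<in> {1..7}" shows "distinct (concat (map (arcsL i) (L7 i))) \<and> set (concat (map (arcsL i) (L7 i))) \<subseteq> tgt 7 7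
  \<and> length (L7 i) = 6 \<and> (\<forall>xs\<in>set (L7 i). length xs = 7 \<and> distinct xs \<and> (\<forall>x\<in>set xs. x < 7))"
  using one_to_seven[OF assms] L7_1 L7_2 L7_3 L7_4 L7_5 L7_6 L7_7 by (elim disjE) simp_all

definition L8 :: "nat \<Rightarrow> nat list list" where
  "L8 i = (if i = 1 then [[4,3,5,1,2,6,0], [2,7,3,6,4,5,0], [3,1,7,5,2,4,6], [6,5,3,7,4,1,0], [7,4,0,3,2,1,6], [0,2,5,7,1,4,3], [5,0,7,6,2,3,1], [1,6,5,4,2,7,0]]
    else if i = 2 then [[4,3,5,1,2,6,0], [5,7,4,2,0,6,3], [1,0,5,6,4,3,7], [7,5,4,6,1,3,2], [5,6,7,2,1,4,0], [7,6,1,5,2,3,0], [4,7,1,0,3,6,2], [1,3,7,0,2,5,4]]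
    else if i = 3 then [[4,3,5,1,2,6,0], [3,2,0,5,7,4,1], [0,3,2,5,1,6,7], [7,2,5,0,3,6,4], [6,4,2,0,1,7,5], [3,5,4,1,0,7,6], [1,7,3,4,0,6,2], [5,6,1,3,7,2,4]]
    else if i = 4 then [[4,3,5,1,2,6,0], [2,6,7,4,5,3,0], [6,7,1,4,2,5,0], [2,7,3,1,4,6,5], [1,0,5,7,4,3,6], [2,3,7,0,1,6,4], [3,2,0,7,1,5,6], [5,4,0,3,1,2,7]]
    else if i = 5 then [[4,3,5,1,2,6,0], [2,7,4,5,0,1,6], [1,6,5,4,2,3,7], [0,3,4,2,5,1,7], [7,0,1,4,6,3,2], [4,1,3,0,5,7,6], [2,0,4,7,3,6,5], [5,3,1,2,0,6,7]]
    else if i = 6 then [[4,3,5,1,2,6,0], [6,4,7,2,1,0,5], [3,7,1,5,4,2,0], [5,6,3,7,0,4,2], [6,2,5,7,1,3,0], [3,1,6,4,7,0,2], [0,5,7,6,3,4,1], [7,6,1,4,5,3,2]]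
    else [[0,3,4,5,6,1,7], [6,2,7,0,5,1,4], [6,0,1,2,4,7,3], [2,4,5,3,1,7,6], [2,0,3,5,7,6,1], [0,1,4,6,3,2,5], [0,6,5,7,2,3,4], [3,1,5,2,0,4,7]])"

lemma L8_1: "distinct (concat (map (arcsL 1) (L8 1))) \<and> set (concat (map (arcsL 1) (L8 1))) \<subseteq> tgt 8 8
  \<and> length (L8 1) = 8 \<and> (\<forall>xs\<in>set (L8 1). length xs = 7 \<and> distinct xs \<and> (\<forall>x\<in>set xs. x < 8))"
  by (simp add: L8_def arcsL_def patl_def tgt_def)

lemma L8_2: "distinct (concat (map (arcsL 2) (L8 2))) \<and> set (concat (map (arcsL 2) (L8 2))) \<subseteq> tgt 8 8
  \<and> length (L8 2) = 8 \<and> (\<forall>xs\<in>set (L8 2). length xs = 7 \<and> distinct xs \<and> (\<forall>x\<in>set xs. x < 8))"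
  by (simp add: L8_def arcsL_def patl_def tgt_def)

lemma L8_3: "distinct (concat (map (arcsL 3) (L8 3))) \<and> set (concat (map (arcsL 3) (L8 3))) \<subseteq> tgt 8 8
  \<and> length (L8 3) = 8 \<and> (\<forall>xs\<in>set (L8 3). length xs = 7 \<and> distinct xs \<and> (\<forall>x\<in>set xs. x < 8))"
  by (simp add: L8_def arcsL_def patl_def tgt_def)

lemma L8_4: "distinct (concat (map (arcsL 4) (L8 4))) \<and> set (concat (map (arcsL 4) (L8 4))) \<subseteq> tgt 8 8
  \<and> length (L8 4) = 8 \<and> (\<forall>xs\<in>set (L8 4). length xs = 7 \<and> distinct xs \<and> (\<forall>x\<in>set xs. x < 8))"
  by (simp add: L8_def arcsL_def patl_def tgt_def)

lemma L8_5: "distinct (concat (map (arcsL 5) (L8 5))) \<and> set (concat (map (arcsL 5) (L8 5))) \<subseteq> tgt 8 8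
  \<and> length (L8 5) = 8 \<and> (\<forall>xs\<in>set (L8 5). length xs = 7 \<and> distinct xs \<and> (\<forall>x\<in>set xs. x < 8))"
  by (simp add: L8_def arcsL_def patl_def tgt_def)

lemma L8_6: "distinct (concat (map (arcsL 6) (L8 6))) \<and> set (concat (map (arcsL 6) (L8 6))) \<subseteq> tgt 8 8
  \<and> length (L8 6) = 8 \<and> (\<forall>xs\<in>set (L8 6). length xs = 7 \<and> distinct xs \<and> (\<forall>x\<in>set xs. x < 8))"
  by (simp add: L8_def arcsL_def patl_def tgt_def)

lemma L8_7: "distinct (concat (map (arcsL 7) (L8 7))) \<and> set (concat (map (arcsL 7) (L8 7))) \<subseteq> tgt 8 8
  \<and> length (L8 7) = 8 \<and> (\<forall>xs\<in>set (L8 7). length xs = 7 \<and> distinct xs \<and> (\<forall>x\<in>set xs. x < 8))"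
  by (simp add: L8_def arcsL_def patl_def tgt_def)

lemma L8_props: assumes "i \<in> {1..7}" shows "distinct (concat (map (arcsL i) (L8 i))) \<and> set (concat (map (arcsL i) (L8 i))) \<subseteq> tgt 8 8
  \<and> length (L8 i) = 8 \<and> (\<forall>xs\<in>set (L8 i). length xs = 7 \<and> distinct xs \<and> (\<forall>x\<in>set xs. x < 8))"
  using one_to_seven[OF assms] L8_1 L8_2 L8_3 L8_4 L8_5 L8_6 L8_7 by (elim disjE) simp_all

definition L15 :: "nat \<Rightarrow> nat list list" where
  "L15 i = (if i = 1 then [[10,3,6,7,5,11,1], [11,2,9,6,13,1,4], [14,5,4,1,13,2,0], [5,4,3,13,0,1,8], [6,14,4,2,8,3,5], [7,2,4,0,5,13,3], [2,7,4,8,0,10,3], [2,12,3,1,6,11,5], [2,14,3,11,6,9,0], [14,2,1,11,3,9,4], [4,12,5,7,0,6,10], [13,4,6,14,5,10,0], [4,6,2,12,1,7,3], [12,6,0,7,1,2,3], [6,13,4,9,1,3,8], [0,11,4,12,6,8,1], [3,0,8,2,6,5,9], [3,6,1,12,0,9,5], [12,0,4,10,2,13,5], [6,10,1,5,8,4,7], [14,3,0,11,2,5,1], [0,14,1,9,2,10,5]]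
    else if i = 2 then [[5,3,0,14,6,12,2], [1,7,0,13,4,5,14], [6,8,2,10,1,14,0], [3,7,6,1,0,5,11], [0,8,5,6,4,14,2], [10,4,14,5,0,2,1], [5,9,6,10,3,1,7], [14,6,1,5,9,2,3], [2,3,12,6,13,1,4], [0,11,3,12,1,9,4], [11,2,1,8,4,7,6], [4,10,5,1,13,6,2], [2,13,3,9,0,8,5], [3,9,4,1,11,2,13], [6,4,5,7,2,14,3], [5,13,4,8,2,9,6], [0,12,1,3,10,5,13], [1,9,0,12,4,3,8], [0,6,2,12,5,3,7], [1,0,10,2,7,4,11], [4,11,0,10,6,8,3], [12,5,11,6,3,0,4]]
    else if i = 3 then [[6,2,9,5,8,1,3], [4,5,0,7,3,9,1], [3,11,2,12,6,13,5], [2,9,6,4,3,1,7], [3,13,0,9,5,1,8], [6,7,4,2,11,1,10], [8,3,4,11,5,6,2], [9,4,13,2,14,0,1], [1,2,3,6,7,5,10], [2,5,12,6,11,0,8], [0,3,2,14,1,13,6], [11,1,2,4,0,10,5], [12,0,7,5,14,6,1], [5,1,0,10,3,11,6], [7,3,13,0,6,8,4], [12,4,5,8,0,14,3], [3,0,4,13,1,6,9], [1,12,5,2,0,9,4], [14,4,11,0,2,7,1], [2,10,4,12,0,5,13], [4,6,10,2,12,3,14], [5,3,10,4,8,6,14]]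
    else if i = 4 then [[4,11,3,9,5,1,7], [12,1,14,2,5,7,3], [8,0,13,6,1,9,4], [12,2,3,1,11,6,0], [2,0,4,3,6,8,1], [6,7,1,8,5,10,0], [5,14,0,3,13,2,8], [0,3,8,6,4,2,9], [14,6,9,5,11,2,4], [14,5,12,4,6,7,2], [0,1,13,4,10,5,11], [2,3,6,1,12,0,10], [4,8,3,5,13,0,14], [11,2,0,7,4,9,3], [13,4,0,1,9,2,5], [5,12,2,6,14,3,7], [11,6,2,13,3,14,1], [0,8,2,1,10,6,5], [12,4,10,3,1,5,6], [5,4,1,10,2,7,0], [4,5,3,10,6,13,1], [11,0,9,6,12,3,4]]
    else if i = 5 then [[4,14,1,10,3,9,6], [4,1,5,7,0,13,2], [7,4,8,3,2,1,6], [6,12,4,3,10,0,2], [6,5,0,14,1,13,4], [11,1,3,4,5,13,6], [0,3,9,4,14,2,5], [7,1,9,5,10,2,3], [13,2,9,1,5,12,3], [5,3,1,0,11,2,8], [1,4,11,5,14,3,6], [14,2,5,13,3,12,0], [3,5,10,6,12,2,11], [8,0,9,6,2,12,5], [2,7,5,11,1,12,4], [0,11,3,7,4,13,1], [10,2,1,8,6,13,0], [6,7,2,8,0,3,14], [3,6,0,2,9,4,8], [10,4,5,6,0,7,1], [8,1,12,0,4,11,6], [5,14,6,10,4,0,9]]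
    else if i = 6 then [[9,6,14,1,2,11,4], [12,3,9,5,11,2,0], [0,6,9,2,4,1,12], [11,4,12,2,10,6,3], [8,1,2,13,3,11,6], [0,9,3,5,1,4,14], [9,1,13,4,5,14,2], [1,9,0,6,4,3,10], [5,12,2,7,0,4,13], [4,7,0,3,14,1,10], [0,1,7,2,14,5,13], [0,5,6,1,7,4,8], [5,2,6,12,1,0,10], [7,3,10,6,11,1,5], [1,3,7,6,14,0,11], [3,4,0,2,8,5,12], [6,4,5,3,0,10,2], [10,4,14,3,6,8,5], [2,13,6,7,5,0,8], [4,8,3,13,6,5,9], [2,5,11,0,13,1,3], [6,12,4,2,3,8,1]]
    else [[1,11,5,3,9,2,12], [4,9,6,1,14,5,7], [14,3,10,5,6,0,4], [3,12,0,11,6,1,7], [14,2,9,4,10,5,0], [12,6,9,5,1,0,2], [3,8,0,14,6,7,2], [0,10,4,2,1,5,9], [10,2,5,12,6,11,0], [2,14,4,0,8,6,13], [7,5,14,6,2,8,3], [8,5,2,3,12,4,6], [2,7,6,4,11,3,10], [6,10,1,4,2,13,0], [12,0,7,1,9,3,5], [4,8,2,0,9,1,13], [5,8,1,0,3,13,6], [11,1,12,4,13,0,3], [5,13,3,14,1,8,4], [13,1,3,4,7,0,5], [11,2,6,3,1,4,5], [2,1,10,6,3,4,11]])"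

lemma L15_1: "distinct (concat (map (arcsL 1) (L15 1))) \<and> set (concat (map (arcsL 1) (L15 1))) \<subseteq> tgt 15 7
  \<and> length (L15 1) = 22 \<and> (\<forall>xs\<in>set (L15 1). length xs = 7 \<and> distinct xs \<and> (\<forall>x\<in>set xs. x < 15))"
  by (simp add: L15_def arcsL_def patl_def tgt_def)

lemma L15_2: "distinct (concat (map (arcsL 2) (L15 2))) \<and> set (concat (map (arcsL 2) (L15 2))) \<subseteq> tgt 15 7
  \<and> length (L15 2) = 22 \<and> (\<forall>xs\<in>set (L15 2). length xs = 7 \<and> distinct xs \<and> (\<forall>x\<in>set xs. x < 15))"
  by (simp add: L15_def arcsL_def patl_def tgt_def)

lemma L15_3: "distinct (concat (map (arcsL 3) (L15 3))) \<and> set (concat (map (arcsL 3) (L15 3))) \<subseteq> tgt 15 7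
  \<and> length (L15 3) = 22 \<and> (\<forall>xs\<in>set (L15 3). length xs = 7 \<and> distinct xs \<and> (\<forall>x\<in>set xs. x < 15))"
  by (simp add: L15_def arcsL_def patl_def tgt_def)

lemma L15_4: "distinct (concat (map (arcsL 4) (L15 4))) \<and> set (concat (map (arcsL 4) (L15 4))) \<subseteq> tgt 15 7
  \<and> length (L15 4) = 22 \<and> (\<forall>xs\<in>set (L15 4). length xs = 7 \<and> distinct xs \<and> (\<forall>x\<in>set xs. x < 15))"
  by (simp add: L15_def arcsL_def patl_def tgt_def)

lemma L15_5: "distinct (concat (map (arcsL 5) (L15 5))) \<and> set (concat (map (arcsL 5) (L15 5))) \<subseteq> tgt 15 7
  \<and> length (L15 5) = 22 \<and> (\<forall>xs\<in>set (L15 5). length xs = 7 \<and> distinct xs \<and> (\<forall>x\<in>set xs. x < 15))"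
  by (simp add: L15_def arcsL_def patl_def tgt_def)

lemma L15_6: "distinct (concat (map (arcsL 6) (L15 6))) \<and> set (concat (map (arcsL 6) (L15 6))) \<subseteq> tgt 15 7
  \<and> length (L15 6) = 22 \<and> (\<forall>xs\<in>set (L15 6). length xs = 7 \<and> distinct xs \<and> (\<forall>x\<in>set xs. x < 15))"
  by (simp add: L15_def arcsL_def patl_def tgt_def)

lemma L15_7: "distinct (concat (map (arcsL 7) (L15 7))) \<and> set (concat (map (arcsL 7) (L15 7))) \<subseteq> tgt 15 7
  \<and> length (L15 7) = 22 \<and> (\<forall>xs\<in>set (L15 7). length xs = 7 \<and> distinct xs \<and> (\<forall>x\<in>set xs. x < 15))"
  by (simp add: L15_def arcsL_def patl_def tgt_def)

lemma L15_props: assumes "i \<in> {1..7}" shows "distinct (concat (map (arcsL i) (L15 i))) \<and> set (concat (map (arcsL i) (L15 i))) \<subseteq> tgt 15 7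
  \<and> length (L15 i) = 22 \<and> (\<forall>xs\<in>set (L15 i). length xs = 7 \<and> distinct xs \<and> (\<forall>x\<in>set xs. x < 15))"
  using one_to_seven[OF assms] L15_1 L15_2 L15_3 L15_4 L15_5 L15_6 L15_7 by (elim disjE) simp_all
section \<open>Generic counting\<close>

lemma lt7: "t < (7::nat) \<Longrightarrow> t = 0 \<or> t = 1 \<or> t = 2 \<or> t = 3 \<or> t = 4 \<or> t = 5 \<or> t = 6"
  by auto

lemma finite_csa: "finite V \<Longrightarrow> finite (complete_sym_arcs V)"
  by (rule finite_subset[of _ "V \<times> V"]) (auto simp: complete_sym_arcs_def)

lemma card_csa:
  assumes "finite V"
  shows "card (complete_sym_arcs V) = card V * (card V - 1)"
proof -
  have eq: "complete_sym_arcs V = V \<times> V - (\<lambda>x. (x,x)) ` V"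
    by (auto simp: complete_sym_arcs_def)
  have sub: "(\<lambda>x. (x,x)) ` V \<subseteq> V \<times> V" by auto
  have ci: "card ((\<lambda>x. (x,x)) ` V) = card V" by (rule card_image) (auto intro: inj_onI)
  have "card (complete_sym_arcs V) = card V * card V - card V"
    using assms by (simp add: eq card_Diff_subset[OF finite_imageI[OF assms] sub] card_cartesian_product ci)
  then show ?thesis by (simp add: diff_mult_distrib2)
qed

lemma card_tgt:
  assumes "H \<le> N"
  shows "card (tgt N H) = N*(N-1) - (N-H)*(N-H-1)"
proof -
  have eq: "tgt N H = complete_sym_arcs {0..<N} - complete_sym_arcs {H..<N}"
    by (auto simp: tgt_def complete_sym_arcs_def)
  have sub: "complete_sym_arcs {H..<N} \<subseteq> complete_sym_arcs {0..<N}"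
    by (auto simp: complete_sym_arcs_def)
  show ?thesis
    by (simp add: eq card_Diff_subset[OF finite_csa sub] card_csa)
qed

lemma card_tgt7: "card (tgt 7 7) = 42" by (simp add: card_tgt)
lemma card_tgt8: "card (tgt 8 8) = 56" by (simp add: card_tgt)
lemma card_tgt15: "card (tgt 15 7) = 154" by (simp add: card_tgt)

lemma finite_tgt: "finite (tgt N H)"
  by (rule finite_subset[of _ "{0..<N} \<times> {0..<N}"]) (auto simp: tgt_def)

lemma length_concat_arcsL: "length (concat (map (arcsL i) T)) = 7 * length T"
  by (induction T) auto

lemma loc_cover:
  assumes d: "distinct (concat (map (arcsL i) T))" and s: "set (concat (map (arcsL i) T)) \<subseteq> S"
    and f: "finite S" and c: "card S = 7 * length T" and ab: "(a,b) \<in> S"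
  shows "\<exists>\<beta><length T. (a,b) \<in> D_arcs i (\<lambda>t. T ! \<beta> ! t)"
proof -
  have "card (set (concat (map (arcsL i) T))) = card S"
    using distinct_card[OF d] length_concat_arcsL c by simp
  then have "set (concat (map (arcsL i) T)) = S" using card_subset_eq[OF f s] by simp
  with ab obtain xs where xs: "xs \<in> set T" "(a,b) \<in> set (arcsL i xs)" by auto
  then obtain \<beta> where "\<beta> < length T" "T ! \<beta> = xs" by (auto simp: in_set_conv_nth)
  then show ?thesis using xs set_arcsL by auto
qed

lemma D_arcs_sub:
  assumes "inj_on u {0..<7}" "u ` {0..<7} \<subseteq> V"
  shows "D_arcs i u \<subseteq> complete_sym_arcs V"
proof
  fix a assume "a \<in> D_arcs i u"
  then obtain s t where st: "(s,t) \<in> set (patl i)" "a = (u s, u t)"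
    unfolding D_arcs_list by auto
  from patl_bounds[OF st(1)] have "s < 7" "t < 7" "s \<noteq> t" by auto
  then have "u s \<noteq> u t" "u s \<in> V" "u t \<in> V" using assms by (auto simp: inj_on_def)
  then show "a \<in> complete_sym_arcs V" using st by (simp add: complete_sym_arcs_def)
qed

lemma card_D_arcs: "card (D_arcs i u) \<le> 7"
  unfolding D_arcs_list using card_length[of "map (\<lambda>(s,t). (u s, u t)) (patl i)"] by simp

lemma finite_D_arcs: "finite (D_arcs i u)"
  unfolding D_arcs_list by simp

lemma D_arcs_map: "(a,b) \<in> D_arcs i u \<Longrightarrow> (g a, g b) \<in> D_arcs i (\<lambda>t. g (u t))"
  unfolding D_arcs_list by auto

lemma count_unique:
  fixes B :: "'i \<Rightarrow> 'a set"
  assumes fI: "finite I" and fB: "\<And>\<iota>. \<iota> \<in> I \<Longrightarrow> finite (B \<iota>)"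
    and sub: "(\<Union>\<iota>\<in>I. B \<iota>) \<subseteq> A" and cov: "A \<subseteq> (\<Union>\<iota>\<in>I. B \<iota>)"
    and sm: "(\<Sum>\<iota>\<in>I. card (B \<iota>)) \<le> card A"
    and i1: "\<iota>1 \<in> I" and i2: "\<iota>2 \<in> I" and x1: "x \<in> B \<iota>1" and x2: "x \<in> B \<iota>2"
  shows "\<iota>1 = \<iota>2"
proof (rule ccontr)
  assume ne: "\<iota>1 \<noteq> \<iota>2"
  let ?R = "(\<Union>\<iota>\<in>I-{\<iota>1}. B \<iota>)"
  have A: "A = B \<iota>1 \<union> ?R" using sub cov i1 by blast
  have fR: "finite ?R" using fI fB by auto
  have f1: "finite (B \<iota>1)" using fB i1 by auto
  have "x \<in> B \<iota>1 \<inter> ?R" using ne i2 x1 x2 by blast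
  then have pos: "card (B \<iota>1 \<inter> ?R) > 0" using fR f1 by (auto simp: card_gt_0_iff)
  have un: "card (B \<iota>1) + card ?R = card A + card (B \<iota>1 \<inter> ?R)"
    using card_Un_Int[OF f1 fR] A by simp
  have le: "card ?R \<le> (\<Sum>\<iota>\<in>I-{\<iota>1}. card (B \<iota>))"
    by (rule card_UN_le) (use fI in auto)
  have "(\<Sum>\<iota>\<in>I. card (B \<iota>)) = card (B \<iota>1) + (\<Sum>\<iota>\<in>I-{\<iota>1}. card (B \<iota>))"
    using sum.remove[OF fI i1] .
  then show False using pos un le sm by linarith
qed

lemma decomp_family:
  fixes bm :: "'i \<Rightarrow> nat \<Rightarrow> 'a"
  assumes fI: "finite I"
    and cp: "\<And>\<iota>. \<iota> \<in> I \<Longrightarrow> inj_on (bm \<iota>) {0..<7} \<and> bm \<iota> ` {0..<7} \<subseteq> V"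
    and cov: "\<And>a. a \<in> complete_sym_arcs V \<Longrightarrow> \<exists>\<iota>\<in>I. a \<in> D_arcs i (bm \<iota>)"
    and cnt: "7 * card I \<le> card (complete_sym_arcs V)"
  shows "has_D_decomposition i V"
proof -
  let ?B = "\<lambda>\<iota>. D_arcs i (bm \<iota>)"
  have sub: "(\<Union>\<iota>\<in>I. ?B \<iota>) \<subseteq> complete_sym_arcs V"
  proof (rule UN_least)
    fix \<iota> assume "\<iota> \<in> I"
    then have "inj_on (bm \<iota>) {0..<7}" "bm \<iota> ` {0..<7} \<subseteq> V" using cp by auto
    then show "?B \<iota> \<subseteq> complete_sym_arcs V" by (rule D_arcs_sub)
  qed
  have covr: "complete_sym_arcs V \<subseteq> (\<Union>\<iota>\<in>I. ?B \<iota>)"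
  proof
    fix a assume "a \<in> complete_sym_arcs V"
    then obtain \<iota> where "\<iota> \<in> I" "a \<in> ?B \<iota>" using cov by blast
    then show "a \<in> (\<Union>\<iota>\<in>I. ?B \<iota>)" by blast
  qed
  have "(\<Sum>\<iota>\<in>I. card (?B \<iota>)) \<le> (\<Sum>\<iota>\<in>I. 7)" by (rule sum_mono) (rule card_D_arcs)
  also have "\<dots> = 7 * card I" by simp
  finally have sm: "(\<Sum>\<iota>\<in>I. card (?B \<iota>)) \<le> card (complete_sym_arcs V)" using cnt by linarith
  show ?thesis unfolding has_D_decomposition_def
  proof (intro exI[of _ "?B ` I"] conjI ballI)
    fix B assume "B \<in> ?B ` I"
    then obtain \<iota> where "\<iota> \<in> I" "B = ?B \<iota>" by auto
    then show "is_D_copy i V B" unfolding is_D_copy_def using cp by blast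
  next
    fix a assume a: "a \<in> complete_sym_arcs V"
    obtain \<iota> where \<iota>: "\<iota> \<in> I" "a \<in> ?B \<iota>" using cov[OF a] by blast
    show "\<exists>!B. B \<in> ?B ` I \<and> a \<in> B"
    proof (rule ex1I[of _ "?B \<iota>"])
      show "?B \<iota> \<in> ?B ` I \<and> a \<in> ?B \<iota>" using \<iota> by auto
    next
      fix B assume "B \<in> ?B ` I \<and> a \<in> B"
      then obtain \<kappa> where \<kappa>: "\<kappa> \<in> I" "B = ?B \<kappa>" "a \<in> ?B \<kappa>" by auto
      have "\<kappa> = \<iota>"
        by (rule count_unique[of I ?B "complete_sym_arcs V", OF fI finite_D_arcs sub covr sm \<kappa>(1) \<iota>(1) \<kappa>(3) \<iota>(2)])
      then show "B = ?B \<iota>" using \<kappa> by simp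
    qed
  qed
qed

section \<open>Mixed blocks\<close>

definition xc :: "nat \<Rightarrow> nat" where "xc t = [0,1,0,1,0,1,2] ! t"
definition ac :: "nat \<Rightarrow> nat" where "ac t = [0,1,4,2,6,5,0] ! t"

definition mixv :: "nat \<Rightarrow> nat \<Rightarrow> nat \<Rightarrow> nat \<Rightarrow> nat \<Rightarrow> nat" where
  "mixv m d z c t = 7 * ((z + xc t * d) mod m) + (c + ac t) mod 7"

definition rr :: "nat \<Rightarrow> nat" where "rr i = [1,2,3,4,3,2,1] ! (i - 1)"
definition pim :: "nat \<Rightarrow> nat \<Rightarrow> nat" where "pim i t = (rr i + 7 - t) mod 7"

lemma seven_split: "(A::nat) < 7 \<Longrightarrow> A' < 7 \<Longrightarrow> 7*X + A = 7*X' + A' \<Longrightarrow> X = X' \<and> A = A'"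
proof -
  assume a: "A < 7" "A' < 7" "7*X + A = 7*X' + A'"
  have "(7*X + A) div 7 = X" "(7*X' + A') div 7 = X'" using a by simp_all
  then have "X = X'" using a(3) by metis
  then show ?thesis using a(3) by simp
qed

lemma mod7_cancel:
  fixes a b c :: nat assumes ab: "a < 7" "b < 7" and e: "(c + a) mod 7 = (c + b) mod 7" shows "a = b"
proof (rule ccontr)
  assume ne: "a \<noteq> b"
  have key: False if xy: "x < y" "y < 7" "(c + x) mod 7 = (c + y) mod 7" for x y :: nat
  proof -
    have "7 dvd (c + y) - (c + x)" using mod_eq_dvd_iff_nat[of "c+x" "c+y" 7] xy by auto
    then have "7 dvd y - x" by simp
    then have "7 \<le> y - x" using xy by (auto dest: dvd_imp_le)
    then show False using xy by simp
  qed
  show False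
  proof (cases "a < b")
    case True then show ?thesis using key[of a b] ab e by simp
  next
    case False then have "b < a" using ne by simp
    then show ?thesis using key[of b a] ab e by simp
  qed
qed

lemma modA1: "(PA::nat) < 7 \<Longrightarrow> (al::nat) < 7 \<Longrightarrow> ((PA + 7 - al) mod 7 + al) mod 7 = PA"
proof -
  assume a: "PA < 7" "al < 7"
  have "((PA + 7 - al) mod 7 + al) mod 7 = (PA + 7 - al + al) mod 7" by (simp add: mod_add_left_eq)
  also have "PA + 7 - al + al = PA + 7" using a by simp
  finally show ?thesis using a by simp
qed

lemma modA2: "(PA::nat) < 7 \<Longrightarrow> (al::nat) < 7 \<Longrightarrow> ((PA + 7 - al) mod 7 + (al + f) mod 7) mod 7 = (PA + f) mod 7"
proof -
  assume a: "PA < 7" "al < 7"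
  have "((PA + 7 - al) mod 7 + (al + f) mod 7) mod 7 = (PA + 7 - al + (al + f)) mod 7" by (simp add: mod_add_eq)
  also have "PA + 7 - al + (al + f) = (PA + f) + 7" using a by simp
  finally show ?thesis by simp
qed

definition cyc :: "(nat \<times> nat) list" where "cyc = [(0,1),(1,2),(2,3),(3,4),(4,5),(5,6),(6,0)]"

lemma cyc_mem: "t < 7 \<Longrightarrow> (t, (t + 1) mod 7) \<in> set cyc"
  by (drule lt7) (auto simp: cyc_def)

lemma both_num:
  assumes "i \<in> {1..7}"
  shows "\<forall>(s,t)\<in>set cyc. ((s,t) \<in> set (patl i) \<or> (\<exists>(a,b)\<in>set (patl i). pim i a = s \<and> pim i b = t)) \<and>
                          ((t,s) \<in> set (patl i) \<or> (\<exists>(a,b)\<in>set (patl i). pim i a = t \<and> pim i b = s))"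
  using one_to_seven[OF assms] by (elim disjE) (simp_all add: cyc_def patl_def pim_def rr_def)

lemma both_dir:
  assumes "i \<in> {1..7}" "t < 7"
  shows "(u t, u ((t + 1) mod 7)) \<in> D_arcs i u \<union> D_arcs i (\<lambda>s. u (pim i s)) \<and>
         (u ((t + 1) mod 7), u t) \<in> D_arcs i u \<union> D_arcs i (\<lambda>s. u (pim i s))"
proof -
  have m1: "(u a, u b) \<in> D_arcs i u" if "(a,b) \<in> set (patl i)" for a b
    using that unfolding D_arcs_list by force
  have m2: "(u (pim i a), u (pim i b)) \<in> D_arcs i (\<lambda>s. u (pim i s))" if "(a,b) \<in> set (patl i)" for a b
    using that unfolding D_arcs_list by force
  let ?t' = "(t+1) mod 7"
  have h: "((t, ?t') \<in> set (patl i) \<or> (\<exists>(a,b)\<in>set (patl i). pim i a = t \<and> pim i b = ?t')) \<and>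
        ((?t', t) \<in> set (patl i) \<or> (\<exists>(a,b)\<in>set (patl i). pim i a = ?t' \<and> pim i b = t))"
    using bspec[OF both_num[OF assms(1)] cyc_mem[OF assms(2)]] by simp
  have g: "(u x, u y) \<in> D_arcs i u \<union> D_arcs i (\<lambda>s. u (pim i s))"
    if dis: "(x, y) \<in> set (patl i) \<or> (\<exists>(a,b)\<in>set (patl i). pim i a = x \<and> pim i b = y)" for x y
  proof (cases "(x, y) \<in> set (patl i)")
    case True then show ?thesis using m1 by blast
  next
    case False
    then obtain a b where ab: "(a,b) \<in> set (patl i)" "pim i a = x" "pim i b = y" using dis False by auto
    show ?thesis using m2[OF ab(1)] ab(2,3) by simp
  qed
  show ?thesis using g h by blast
qed

lemma pim_lt: "pim i t < 7" by (simp add: pim_def)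

lemma rr_lt: "i \<in> {1..7} \<Longrightarrow> rr i < 7"
  using one_to_seven[of i] by (auto simp: rr_def)

lemma pim_inj: "inj_on (pim i) {0..<7}"
proof (rule inj_onI)
  fix t t' assume t: "t \<in> {0..<7}" and t': "t' \<in> {0..<7}" and e: "pim i t = pim i t'"
  have 1: "rr i + 7 - t = (rr i + 1) + (6 - t)" using t by simp
  have 2: "rr i + 7 - t' = (rr i + 1) + (6 - t')" using t' by simp
  have "((rr i + 1) + (6 - t)) mod 7 = ((rr i + 1) + (6 - t')) mod 7"
    using e unfolding pim_def 1 2 .
  then have "6 - t = 6 - t'" using mod7_cancel[of "6 - t" "6 - t'" "rr i + 1"] by simp
  then show "t = t'" using t t' by simp
qed

lemma ac_lt: "t < 7 \<Longrightarrow> ac t < 7"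
  by (drule lt7) (auto simp: ac_def)

lemma ac_eq: "t < 7 \<Longrightarrow> t' < 7 \<Longrightarrow> ac t = ac t' \<Longrightarrow> t = t' \<or> (t = 0 \<and> t' = 6) \<or> (t = 6 \<and> t' = 0)"
  by (drule lt7, drule lt7) (auto simp: ac_def)

lemma mod_shift_ne: "(z::nat) < m \<Longrightarrow> 0 < k \<Longrightarrow> k < m \<Longrightarrow> (z + k) mod m \<noteq> z"
proof
  assume a: "z < m" "0 < k" "k < m" "(z + k) mod m = z"
  show False
  proof (cases "z + k < m")
    case True then show ?thesis using a by simp
  next
    case False
    then have "(z + k) mod m = (z + k - m) mod m" by (simp add: le_mod_geq)
    also have "\<dots> = z + k - m" using a by simp
    finally show ?thesis using a False by simp
  qed
qed

lemma mix_inj: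
  assumes "2*d < m" "1 \<le> d" "z < m"
  shows "inj_on (mixv m d z c) {0..<7}"
proof (rule inj_onI)
  fix t t' assume t: "t \<in> {0..<7}" and t': "t' \<in> {0..<7}" and eq: "mixv m d z c t = mixv m d z c t'"
  have "(c + ac t) mod 7 < 7" "(c + ac t') mod 7 < 7" by auto
  from seven_split[OF this eq[unfolded mixv_def]]
  have X: "(z + xc t * d) mod m = (z + xc t' * d) mod m" and A: "(c + ac t) mod 7 = (c + ac t') mod 7"
    by auto
  have "ac t = ac t'" using mod7_cancel[OF ac_lt ac_lt A] t t' by auto
  then have "t = t' \<or> (t = 0 \<and> t' = 6) \<or> (t = 6 \<and> t' = 0)" using ac_eq t t' by auto
  moreover have "(z + 2 * d) mod m \<noteq> z" using mod_shift_ne[of z m "2*d"] assms by auto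
  moreover have "z mod m = z" using assms by simp
  ultimately show "t = t'" using X by (auto simp: xc_def)
qed

lemma mixv_lt: "0 < m \<Longrightarrow> mixv m d z c t < 7 * m"
proof -
  assume m: "0 < m"
  have "(z + xc t * d) mod m < m" using m by simp
  then have "(z + xc t * d) mod m \<le> m - 1" by linarith
  moreover have "(c + ac t) mod 7 < 7" by simp
  ultimately show ?thesis unfolding mixv_def using m by linarith
qed

lemma shiftX: "(X::nat) < m \<Longrightarrow> k \<le> m \<Longrightarrow> ((X + (m - k)) mod m + (k + j)) mod m = (X + j) mod m"
proof -
  assume a: "X < m" "k \<le> m"
  have "((X + (m - k)) mod m + (k + j)) mod m = (X + (m - k) + (k + j)) mod m" by (simp add: mod_add_left_eq)
  also have "X + (m - k) + (k + j) = (X + j) + m" using a by simp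
  also have "(X + j + m) mod m = (X + j) mod m" by simp
  finally show ?thesis .
qed

lemma edge_gen:
  assumes tP: "tP < 7" and xq: "xc tQ = xc tP + 1" and aq: "(ac tP + f) mod 7 = ac tQ"
    and PX: "PX < m" and PA: "PA < 7" and f: "f < 7" and QX: "QX = (PX + e) mod m" and QA: "QA = (PA + f) mod 7"
    and k: "xc tP * e \<le> m"
  shows "mixv m e ((PX + (m - xc tP * e)) mod m) ((PA + 7 - ac tP) mod 7) tP = 7*PX + PA \<and>
         mixv m e ((PX + (m - xc tP * e)) mod m) ((PA + 7 - ac tP) mod 7) tQ = 7*QX + QA"
proof -
  have al: "ac tP < 7" using ac_lt[OF tP] .
  have x1: "((PX + (m - xc tP * e)) mod m + xc tP * e) mod m = PX"
    using shiftX[OF PX k, of 0] PX by simp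
  have x2: "((PX + (m - xc tP * e)) mod m + xc tQ * e) mod m = QX"
    using shiftX[OF PX k, of e] QX xq by (simp add: algebra_simps)
  have a1: "((PA + 7 - ac tP) mod 7 + ac tP) mod 7 = PA" using modA1[OF PA al] .
  have a2: "((PA + 7 - ac tP) mod 7 + ac tQ) mod 7 = QA" using modA2[OF PA al, of f] QA aq by simp
  show ?thesis unfolding mixv_def using x1 x2 a1 a2 by simp
qed

lemma mix_edge:
  assumes m: "odd m" and P: "P < 7*m" and Q: "Q < 7*m" and e1: "1 \<le> e" and e2: "2*e < m"
    and QXe: "Q div 7 = (P div 7 + e) mod m"
  shows "\<exists>d z c t. 1 \<le> d \<and> 2*d < m \<and> z < m \<and> c < 7 \<and> t < 7 \<and>
     ((mixv m d z c t = P \<and> mixv m d z c ((t+1) mod 7) = Q) \<or> (mixv m d z c t = Q \<and> mixv m d z c ((t+1) mod 7) = P))"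
proof -
  define PX PA QX QA where "PX = P div 7" and "PA = P mod 7" and "QX = Q div 7" and "QA = Q mod 7"
  have Peq: "P = 7*PX + PA" and Qeq: "Q = 7*QX + QA" unfolding PX_def PA_def QX_def QA_def by simp_all
  have PX: "PX < m" using P unfolding PX_def by (simp add: div_less_iff_less_mult mult.commute)
  have PA: "PA < 7" and QA7: "QA < 7" unfolding PA_def QA_def by simp_all
  have QX: "QX = (PX + e) mod m" using QXe unfolding PX_def QX_def .
  define f where "f = (QA + 7 - PA) mod 7"
  have f7: "f < 7" unfolding f_def by simp
  have "PA + (QA + 7 - PA) = QA + 7" using PA by simp
  then have QA: "QA = (PA + f) mod 7" unfolding f_def using QA7 by (simp add: mod_add_right_eq)
  have em: "e \<le> m" using e2 by simp
  have G: "\<exists>d z c t. 1 \<le> d \<and> 2*d < m \<and> z < m \<and> c < 7 \<and> t < 7 \<and>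
     ((mixv m d z c t = P \<and> mixv m d z c ((t+1) mod 7) = Q) \<or> (mixv m d z c t = Q \<and> mixv m d z c ((t+1) mod 7) = P))"
    if tP: "tP < 7" and tQ: "tQ < 7" and xq: "xc tQ = xc tP + 1" and aq: "(ac tP + f) mod 7 = ac tQ"
      and x1: "xc tP \<le> 1" and adj: "tQ = (tP + 1) mod 7 \<or> tP = (tQ + 1) mod 7" for tP tQ
  proof -
    have k: "xc tP * e \<le> m" using x1 em by (cases "xc tP") auto
    let ?z = "(PX + (m - xc tP * e)) mod m" and ?c = "(PA + 7 - ac tP) mod 7"
    from edge_gen[OF tP xq aq PX PA f7 QX QA k]
    have v: "mixv m e ?z ?c tP = P" "mixv m e ?z ?c tQ = Q" using Peq Qeq by auto
    have zc: "?z < m" "?c < 7" using e2 by auto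
    from adj show ?thesis
    proof
      assume "tQ = (tP + 1) mod 7"
      then show ?thesis using v zc e1 e2 tP by blast
    next
      assume "tP = (tQ + 1) mod 7"
      then show ?thesis using v zc e1 e2 tQ by blast
    qed
  qed
  have "f = 0 \<or> f = 1 \<or> f = 2 \<or> f = 3 \<or> f = 4 \<or> f = 5 \<or> f = 6" using lt7[OF f7] .
  then show ?thesis
  proof (elim disjE)
    assume f: "f = 1" show ?thesis by (rule G[of 0 1]) (simp_all add: xc_def ac_def f)
  next
    assume f: "f = 4" show ?thesis by (rule G[of 2 1]) (simp_all add: xc_def ac_def f)
  next
    assume f: "f = 5" show ?thesis by (rule G[of 2 3]) (simp_all add: xc_def ac_def f)
  next
    assume f: "f = 3" show ?thesis by (rule G[of 4 3]) (simp_all add: xc_def ac_def f)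
  next
    assume f: "f = 6" show ?thesis by (rule G[of 4 5]) (simp_all add: xc_def ac_def f)
  next
    assume f: "f = 2" show ?thesis by (rule G[of 5 6]) (simp_all add: xc_def ac_def f)
  next
    assume f: "f = 0"
    then have QAPA: "QA = PA" using QA PA by simp
    have v6: "mixv m d z c 6 = 7 * ((z + 2 * d) mod m) + c mod 7" for d z c
      by (simp add: mixv_def xc_def ac_def)
    have v0: "mixv m d z c 0 = 7 * (z mod m) + c mod 7" for d z c
      by (simp add: mixv_def xc_def ac_def)
    have n6: "((6::nat) + 1) mod 7 = 0" by simp
    show ?thesis
    proof (cases "even e")
      case True
      define d where "d = e div 2"
      have ed: "e = 2 * d" using True unfolding d_def by simp
      have d1: "1 \<le> d" using e1 ed by simp
      have "mixv m d PX PA 6 = Q" using v6[of d PX PA] QX QAPA Qeq ed PA by simp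
      moreover have "mixv m d PX PA 0 = P" using v0[of d PX PA] PX PA Peq by simp
      ultimately show ?thesis using d1 e2 ed PX PA n6
        by (intro exI[of _ d] exI[of _ PX] exI[of _ PA] exI[of _ 6]) simp
    next
      case False
      define d where "d = (m - e) div 2"
      have ev: "even (m - e)" using False m e2 by simp
      have ed: "2 * d = m - e" using ev unfolding d_def by simp
      have d1: "1 \<le> d" using ed e2 by simp
      have d2: "2 * d < m" using ed e1 e2 by simp
      have QXm: "QX < m" using QX e2 by simp
      have "(QX + (m - e)) mod m = ((PX + e) mod m + (m - e)) mod m" using QX by simp
      also have "\<dots> = (PX + e + (m - e)) mod m" by (simp add: mod_add_left_eq)
      also have "PX + e + (m - e) = PX + m" using em by simp
      finally have "(QX + (m - e)) mod m = PX" using PX by simp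
      then have "mixv m d QX QA 6 = P" using v6[of d QX QA] ed QAPA Peq PA by simp
      moreover have "mixv m d QX QA 0 = Q" using v0[of d QX QA] QXm QA7 Qeq by simp
      ultimately show ?thesis using d1 d2 QXm QA7 n6
        by (intro exI[of _ d] exI[of _ QX] exI[of _ QA] exI[of _ 6]) simp
    qed
  qed
qed

lemma mix_cover:
  assumes m: "odd m" and p: "p < 7*m" and q: "q < 7*m" and ne: "p div 7 \<noteq> q div 7"
  shows "\<exists>d z c t. 1 \<le> d \<and> 2*d < m \<and> z < m \<and> c < 7 \<and> t < 7 \<and>
     ((mixv m d z c t = p \<and> mixv m d z c ((t+1) mod 7) = q) \<or> (mixv m d z c t = q \<and> mixv m d z c ((t+1) mod 7) = p))"
proof -
  define x y where "x = p div 7" and "y = q div 7"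
  have x: "x < m" and y: "y < m" using p q unfolding x_def y_def
    by (simp_all add: div_less_iff_less_mult mult.commute)
  have ne': "x \<noteq> y" using ne unfolding x_def y_def .
  have nm: "2 * k \<noteq> m" for k using m by auto
  have sw: "\<exists>d z c t. 1 \<le> d \<and> 2*d < m \<and> z < m \<and> c < 7 \<and> t < 7 \<and>
     ((mixv m d z c t = p \<and> mixv m d z c ((t+1) mod 7) = q) \<or> (mixv m d z c t = q \<and> mixv m d z c ((t+1) mod 7) = p))"
    if "\<exists>d z c t. 1 \<le> d \<and> 2*d < m \<and> z < m \<and> c < 7 \<and> t < 7 \<and>
     ((mixv m d z c t = q \<and> mixv m d z c ((t+1) mod 7) = p) \<or> (mixv m d z c t = p \<and> mixv m d z c ((t+1) mod 7) = q))"
    using that by blast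
  show ?thesis
  proof (cases "x < y")
    case True
    show ?thesis
    proof (cases "2 * (y - x) < m")
      case True
      have "q div 7 = (p div 7 + (y - x)) mod m" using \<open>x < y\<close> y unfolding x_def y_def by simp
      then show ?thesis using mix_edge[OF m p q _ True] \<open>x < y\<close> by simp
    next
      case False
      then have lt: "m < 2 * (y - x)" using nm[of "y - x"] by simp
      have "p div 7 = (q div 7 + (m - (y - x))) mod m"
      proof -
        have "y + (m - (y - x)) = x + m" using \<open>x < y\<close> y by simp
        then show ?thesis using x unfolding x_def y_def by simp
      qed
      moreover have "1 \<le> m - (y - x)" "2 * (m - (y - x)) < m" using y lt by simp_all
      ultimately show ?thesis using mix_edge[OF m q p] sw by blast
    qed
  next
    case False
    then have yx: "y < x" using ne' by simp
    show ?thesis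
    proof (cases "2 * (x - y) < m")
      case True
      have "p div 7 = (q div 7 + (x - y)) mod m" using yx x unfolding x_def y_def by simp
      then show ?thesis using mix_edge[OF m q p _ True] yx sw by simp
    next
      case False
      then have lt: "m < 2 * (x - y)" using nm[of "x - y"] by simp
      have "q div 7 = (p div 7 + (m - (x - y))) mod m"
      proof -
        have "x + (m - (x - y)) = y + m" using yx x by simp
        then show ?thesis using y unfolding x_def y_def by simp
      qed
      moreover have "1 \<le> m - (x - y)" "2 * (m - (x - y)) < m" using x lt by simp_all
      ultimately show ?thesis using mix_edge[OF m p q] by blast
    qed
  qed
qed
section \<open>The global family\<close>

definition place :: "nat \<Rightarrow> nat \<Rightarrow> nat \<Rightarrow> nat" where
  "place m x l = (if l < 7 then 7*x + l else 7*m + (l - 7))"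

lemma place_inj: "x < m \<Longrightarrow> inj_on (place m x) {..<15}"
  by (auto simp: inj_on_def place_def split: if_splits)

datatype bidx = Mix nat nat nat bool | Loc nat nat | Hol nat

fun bmap :: "nat \<Rightarrow> nat \<Rightarrow> bool \<Rightarrow> bidx \<Rightarrow> nat \<Rightarrow> nat" where
  "bmap i m hol (Mix d z c s) = (if s then (\<lambda>t. mixv m d z c (pim i t)) else mixv m d z c)"
| "bmap i m hol (Loc x \<beta>) = (\<lambda>t. place m x ((if hol then L15 i else L7 i) ! \<beta> ! t))"
| "bmap i m hol (Hol \<beta>) = (\<lambda>t. 7*m + L8 i ! \<beta> ! t)"

definition Iset :: "nat \<Rightarrow> bool \<Rightarrow> bidx set" where
  "Iset m hol = (\<lambda>(d,z,c,s). Mix d z c s) ` ({1..(m-1) div 2} \<times> {..<m} \<times> {..<7} \<times> UNIV)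
     \<union> (\<lambda>(x,\<beta>). Loc x \<beta>) ` ({..<m} \<times> {..<(if hol then 22 else 6)})
     \<union> Hol ` {\<beta>. hol \<and> \<beta> < 8}"

lemma finite_Iset: "finite (Iset m hol)"
  by (simp add: Iset_def)

lemma card_Iset: "card (Iset m hol) = (m-1) div 2 * m * 7 * 2 + m * (if hol then 22 else 6) + (if hol then 8 else 0)"
proof -
  let ?A = "(\<lambda>(d,z,c,s). Mix d z c s) ` ({1..(m-1) div 2} \<times> {..<m} \<times> {..<(7::nat)} \<times> (UNIV::bool set))"
  let ?B = "(\<lambda>(x,\<beta>). Loc x \<beta>) ` ({..<m} \<times> {..<(if hol then 22 else 6::nat)})"
  let ?C = "Hol ` {\<beta>. hol \<and> \<beta> < 8}"
  have i1: "inj_on (\<lambda>(d,z,c,s). Mix d z c s) X" for X by (auto simp: inj_on_def)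
  have i2: "inj_on (\<lambda>(x,\<beta>). Loc x \<beta>) X" for X by (auto simp: inj_on_def)
  have c1: "card ?A = (m-1) div 2 * m * 7 * 2"
    by (simp add: card_image[OF i1] card_cartesian_product)
  have c2: "card ?B = m * (if hol then 22 else 6)"
    by (simp add: card_image[OF i2] card_cartesian_product)
  have c3: "card ?C = (if hol then 8 else 0)"
    by (simp add: card_image inj_on_def card_Collect_less_nat)
  have fA: "finite ?A" and fB: "finite ?B" and fC: "finite ?C" by auto
  have d1: "?A \<inter> ?B = {}" by auto
  have d2: "(?A \<union> ?B) \<inter> ?C = {}" by auto
  have "card (Iset m hol) = card (?A \<union> ?B) + card ?C"
    unfolding Iset_def by (rule card_Un_disjoint) (use fA fB fC d2 in auto)
  also have "card (?A \<union> ?B) = card ?A + card ?B" by (rule card_Un_disjoint[OF fA fB d1])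
  finally show ?thesis using c1 c2 c3 by simp
qed

lemma Iset_cases:
  assumes "\<iota> \<in> Iset m hol"
  obtains d z c s where "\<iota> = Mix d z c s" "1 \<le> d" "2 * d < m" "z < m" "c < 7"
  | x \<beta> where "\<iota> = Loc x \<beta>" "x < m" "\<beta> < (if hol then 22 else 6)"
  | \<beta> where "\<iota> = Hol \<beta>" "hol" "\<beta> < 8"
proof -
  have h: "2 * d < m" if "d \<le> (m - 1) div 2" "1 \<le> d" for d
  proof -
    have "2 * ((m-1) div 2) \<le> m - 1" using div_mult_mod_eq[of "m-1" 2] by linarith
    then show ?thesis using that by linarith
  qed
  consider (A) "\<iota> \<in> (\<lambda>(d,z,c,s). Mix d z c s) ` ({1..(m-1) div 2} \<times> {..<m} \<times> {..<7} \<times> UNIV)"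
    | (B) "\<iota> \<in> (\<lambda>(x,\<beta>). Loc x \<beta>) ` ({..<m} \<times> {..<(if hol then 22 else 6)})"
    | (C) "\<iota> \<in> Hol ` {\<beta>. hol \<and> \<beta> < 8}"
    using assms unfolding Iset_def by blast
  then show ?thesis
  proof cases
    case A
    then obtain d z c s where w: "\<iota> = Mix d z c s" "d \<in> {1..(m-1) div 2}" "z < m" "c < 7" by auto
    then show ?thesis using that(1)[OF w(1)] h[of d] by auto
  next
    case B
    then obtain x \<beta> where w: "\<iota> = Loc x \<beta>" "x < m" "\<beta> < (if hol then 22 else 6)" by auto
    then show ?thesis using that(2) by blast
  next
    case C
    then obtain \<beta> where w: "\<iota> = Hol \<beta>" "hol" "\<beta> < 8" by auto
    then show ?thesis using that(3) by blast
  qed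
qed

lemma Mix_in: "1 \<le> d \<Longrightarrow> 2 * d < m \<Longrightarrow> z < m \<Longrightarrow> c < 7 \<Longrightarrow> Mix d z c s \<in> Iset m hol"
proof -
  assume a: "1 \<le> d" "2 * d < m" "z < m" "c < 7"
  then have "d \<in> {1..(m-1) div 2}" by auto
  then have "(d, z, c, s) \<in> {1..(m-1) div 2} \<times> {..<m} \<times> {..<7} \<times> (UNIV::bool set)" using a by simp
  then have "Mix d z c s \<in> (\<lambda>(d,z,c,s). Mix d z c s) ` ({1..(m-1) div 2} \<times> {..<m} \<times> {..<7} \<times> UNIV)"
    by (rule rev_image_eqI) simp
  then show ?thesis unfolding Iset_def by blast
qed

lemma Loc_in: "x < m \<Longrightarrow> \<beta> < (if hol then 22 else 6) \<Longrightarrow> Loc x \<beta> \<in> Iset m hol"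
  unfolding Iset_def by force

lemma Hol_in: "hol \<Longrightarrow> \<beta> < 8 \<Longrightarrow> Hol \<beta> \<in> Iset m hol"
  unfolding Iset_def by force

lemma LT_props:
  assumes "i \<in> {1..7}"
  shows "distinct (concat (map (arcsL i) (if hol then L15 i else L7 i))) \<and>
         set (concat (map (arcsL i) (if hol then L15 i else L7 i))) \<subseteq> tgt (if hol then 15 else 7) 7 \<and>
         length (if hol then L15 i else L7 i) = (if hol then 22 else 6) \<and>
         (\<forall>xs\<in>set (if hol then L15 i else L7 i). length xs = 7 \<and> distinct xs \<and> (\<forall>x\<in>set xs. x < (if hol then 15 else 7)))"
  using L15_props[OF assms] L7_props[OF assms] by (cases hol) simp_all

lemma card_tgtLT: "card (tgt (if hol then 15 else 7) 7) = 7 * (if hol then 22 else 6)"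
  using card_tgt7 card_tgt15 by (cases hol) simp_all

lemma loc_cover_LT:
  assumes i: "i \<in> {1..7}" and ab: "(a,b) \<in> tgt (if hol then 15 else 7) 7"
  shows "\<exists>\<beta><(if hol then 22 else 6). (a,b) \<in> D_arcs i (\<lambda>t. (if hol then L15 i else L7 i) ! \<beta> ! t)"
proof -
  note P = LT_props[OF i, of hol]
  have "\<exists>\<beta><length (if hol then L15 i else L7 i). (a,b) \<in> D_arcs i (\<lambda>t. (if hol then L15 i else L7 i) ! \<beta> ! t)"
    by (rule loc_cover[where S = "tgt (if hol then 15 else 7) 7"]) (use P card_tgtLT finite_tgt ab in auto)
  then show ?thesis using P by simp
qed

lemma L8_cover:
  assumes i: "i \<in> {1..7}" and ab: "(a,b) \<in> tgt 8 8"
  shows "\<exists>\<beta><8. (a,b) \<in> D_arcs i (\<lambda>t. L8 i ! \<beta> ! t)"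
proof -
  note P = L8_props[OF i]
  have "\<exists>\<beta><length (L8 i). (a,b) \<in> D_arcs i (\<lambda>t. L8 i ! \<beta> ! t)"
    by (rule loc_cover[where S = "tgt 8 8"]) (use P card_tgt8 finite_tgt ab in auto)
  then show ?thesis using P by simp
qed

lemma inj_nth7: "length xs = 7 \<Longrightarrow> distinct xs \<Longrightarrow> inj_on (\<lambda>t. xs ! t) {0..<7}"
  by (rule inj_on_nth) auto

lemma copies:
  assumes m: "odd m" and i: "i \<in> {1..7}" and io: "\<iota> \<in> Iset m hol"
  shows "inj_on (bmap i m hol \<iota>) {0..<7} \<and> bmap i m hol \<iota> ` {0..<7} \<subseteq> {0..<7*m + (if hol then 8 else 0)}"
  using io
proof (cases rule: Iset_cases)
  case (1 d z c s)
  have m0: "0 < m" using 1 by simp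
  have inj: "inj_on (mixv m d z c) {0..<7}" using mix_inj[of d m z c] 1 by simp
  have inj2: "inj_on (\<lambda>t. mixv m d z c (pim i t)) {0..<7}"
  proof -
    have "pim i ` {0..<7} \<subseteq> {0..<7}" using pim_lt by auto
    then have "inj_on (mixv m d z c) (pim i ` {0..<7})" using inj_on_subset[OF inj] by blast
    then show ?thesis using comp_inj_on[OF pim_inj] by (simp add: comp_def)
  qed
  have rng: "mixv m d z c t < 7*m + (if hol then 8 else 0)" for t using mixv_lt[OF m0] by (simp add: less_le_trans[OF mixv_lt[OF m0]])
  show ?thesis using 1 inj inj2 rng by auto
next
  case (2 x \<beta>)
  let ?T = "if hol then L15 i else L7 i"
  note P = LT_props[OF i, of hol]
  have xs: "?T ! \<beta> \<in> set ?T" using 2 P by simp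
  have l7: "length (?T ! \<beta>) = 7" and dx: "distinct (?T ! \<beta>)" and lt: "\<forall>y\<in>set (?T ! \<beta>). y < (if hol then 15 else 7)"
    using P xs by blast+
  have inj1: "inj_on (\<lambda>t. ?T ! \<beta> ! t) {0..<7}" by (rule inj_nth7[OF l7 dx])
  have sub: "(\<lambda>t. ?T ! \<beta> ! t) ` {0..<7} \<subseteq> {..<15}"
  proof
    fix y assume "y \<in> (\<lambda>t. ?T ! \<beta> ! t) ` {0..<7}"
    then obtain t where t: "t < 7" "y = ?T ! \<beta> ! t" by auto
    then have "y \<in> set (?T ! \<beta>)" using l7 by simp
    then have "y < (if hol then 15 else 7)" using lt by blast
    then show "y \<in> {..<15}" by (auto split: if_splits)
  qed
  have inj: "inj_on (\<lambda>t. place m x (?T ! \<beta> ! t)) {0..<7}"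
    using comp_inj_on[OF inj1 inj_on_subset[OF place_inj[OF \<open>x < m\<close>] sub]] by (simp add: comp_def)
  have rng: "place m x (?T ! \<beta> ! t) < 7*m + (if hol then 8 else 0)" if "t < 7" for t
  proof -
    have "?T ! \<beta> ! t \<in> set (?T ! \<beta>)" using l7 that by simp
    then have "?T ! \<beta> ! t < (if hol then 15 else 7)" using lt by blast
    then show ?thesis using \<open>x < m\<close> by (auto simp: place_def split: if_splits)
  qed
  show ?thesis using 2 inj rng by auto
next
  case (3 \<beta>)
  note P = L8_props[OF i]
  have xs: "L8 i ! \<beta> \<in> set (L8 i)" using 3 P by simp
  have l7: "length (L8 i ! \<beta>) = 7" and dx: "distinct (L8 i ! \<beta>)" and lt: "\<forall>y\<in>set (L8 i ! \<beta>). y < 8"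
    using P xs by blast+
  have inj1: "inj_on (\<lambda>t. L8 i ! \<beta> ! t) {0..<7}" by (rule inj_nth7[OF l7 dx])
  have inj: "inj_on (\<lambda>t. 7*m + L8 i ! \<beta> ! t) {0..<7}" using inj1 by (auto simp: inj_on_def)
  have rng: "7*m + L8 i ! \<beta> ! t < 7*m + (if hol then 8 else 0)" if "t < 7" for t
  proof -
    have "L8 i ! \<beta> ! t \<in> set (L8 i ! \<beta>)" using l7 that by simp
    then show ?thesis using lt \<open>hol\<close> by auto
  qed
  show ?thesis using 3 inj rng by auto
qed

lemma coverage:
  assumes m: "odd m" and i: "i \<in> {1..7}" and a: "a \<in> complete_sym_arcs {0..<7*m + (if hol then 8 else 0)}"
  shows "\<exists>\<iota>\<in>Iset m hol. a \<in> D_arcs i (bmap i m hol \<iota>)"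
proof -
  obtain p q where a_eq: "a = (p,q)" and p: "p < 7*m + (if hol then 8 else 0)" and q: "q < 7*m + (if hol then 8 else 0)"
    and pq: "p \<noteq> q"
    using a unfolding complete_sym_arcs_def by auto
  have locfact: "\<exists>\<iota>\<in>Iset m hol. (p,q) \<in> D_arcs i (bmap i m hol \<iota>)"
    if x: "x < m" and ap: "place m x a' = p" and bq: "place m x b' = q" and ab: "(a',b') \<in> tgt (if hol then 15 else 7) 7"
    for x a' b'
  proof -
    obtain \<beta> where b: "\<beta> < (if hol then 22 else 6)" and mem: "(a',b') \<in> D_arcs i (\<lambda>t. (if hol then L15 i else L7 i) ! \<beta> ! t)"
      using loc_cover_LT[OF i ab] by blast
    have "(place m x a', place m x b') \<in> D_arcs i (bmap i m hol (Loc x \<beta>))"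
      using D_arcs_map[OF mem, of "place m x"] by simp
    then show ?thesis using Loc_in[OF x b] ap bq by blast
  qed
  show ?thesis
  proof (cases "p < 7*m \<and> q < 7*m")
    case True
    then have p7: "p < 7*m" and q7: "q < 7*m" by auto
    show ?thesis
    proof (cases "p div 7 = q div 7")
      case True
      have x: "p div 7 < m" using p7 by (simp add: div_less_iff_less_mult mult.commute)
      have "place m (p div 7) (p mod 7) = p" by (simp add: place_def)
      moreover have "place m (p div 7) (q mod 7) = q" using True by (simp add: place_def)
      moreover have "(p mod 7, q mod 7) \<in> tgt (if hol then 15 else 7) 7"
      proof -
        have "p mod 7 \<noteq> q mod 7" using True pq by (metis div_mult_mod_eq)
        then show ?thesis by (auto simp: tgt_def)
      qed
      ultimately show ?thesis using locfact[OF x] a_eq by blast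
    next
      case False
      obtain d z c t where dz: "1 \<le> d" "2*d < m" "z < m" "c < 7" "t < 7"
        and e: "(mixv m d z c t = p \<and> mixv m d z c ((t+1) mod 7) = q) \<or> (mixv m d z c t = q \<and> mixv m d z c ((t+1) mod 7) = p)"
        using mix_cover[OF m p7 q7 False] by blast
      have bd: "(mixv m d z c t, mixv m d z c ((t + 1) mod 7)) \<in> D_arcs i (mixv m d z c) \<union> D_arcs i (\<lambda>s. mixv m d z c (pim i s)) \<and>
                (mixv m d z c ((t + 1) mod 7), mixv m d z c t) \<in> D_arcs i (mixv m d z c) \<union> D_arcs i (\<lambda>s. mixv m d z c (pim i s))"
        using both_dir[OF i dz(5)] .
      have "(p,q) \<in> D_arcs i (mixv m d z c) \<union> D_arcs i (\<lambda>s. mixv m d z c (pim i s))"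
        using bd e by auto
      moreover have "D_arcs i (mixv m d z c) = D_arcs i (bmap i m hol (Mix d z c False))" by simp
      moreover have "D_arcs i (\<lambda>s. mixv m d z c (pim i s)) = D_arcs i (bmap i m hol (Mix d z c True))" by simp
      ultimately show ?thesis using Mix_in[OF dz(1-4)] a_eq by (metis Un_iff)
    qed
  next
    case False
    then have hol: "hol" using p q by (cases hol) auto
    show ?thesis
    proof (cases "p < 7*m")
      case True
      then have q7: "7*m \<le> q" using False by auto
      have x: "p div 7 < m" using True by (simp add: div_less_iff_less_mult mult.commute)
      have "place m (p div 7) (p mod 7) = p" by (simp add: place_def)
      moreover have "place m (p div 7) (q - 7*m + 7) = q"
      proof -
        have "\<not> (q - 7*m + 7 < 7)" using q7 by simp
        then show ?thesis using q7 by (simp add: place_def)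
      qed
      moreover have "(p mod 7, q - 7*m + 7) \<in> tgt (if hol then 15 else 7) 7"
        using q q7 hol by (auto simp: tgt_def)
      ultimately show ?thesis using locfact[OF x] a_eq by blast
    next
      case False
      then have p7: "7*m \<le> p" by simp
      show ?thesis
      proof (cases "q < 7*m")
        case True
        have x: "q div 7 < m" using True by (simp add: div_less_iff_less_mult mult.commute)
        have "place m (q div 7) (q mod 7) = q" by (simp add: place_def)
        moreover have "place m (q div 7) (p - 7*m + 7) = p"
        proof -
          have "\<not> (p - 7*m + 7 < 7)" using p7 by simp
          then show ?thesis using p7 by (simp add: place_def)
        qed
        moreover have "(p - 7*m + 7, q mod 7) \<in> tgt (if hol then 15 else 7) 7"
          using p p7 hol by (auto simp: tgt_def)
        ultimately show ?thesis using locfact[OF x] a_eq by blast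
      next
        case False
        then have q7: "7*m \<le> q" by simp
        have ab: "(p - 7*m, q - 7*m) \<in> tgt 8 8" using p q p7 q7 pq hol by (auto simp: tgt_def)
        obtain \<beta> where b: "\<beta> < 8" and mem: "(p - 7*m, q - 7*m) \<in> D_arcs i (\<lambda>t. L8 i ! \<beta> ! t)"
          using L8_cover[OF i ab] by blast
        have mem2: "(p, q) \<in> D_arcs i (\<lambda>t. 7*m + L8 i ! \<beta> ! t)"
          using D_arcs_map[OF mem, of "\<lambda>l. 7*m + l"] p7 q7 by simp
        have "bmap i m hol (Hol \<beta>) = (\<lambda>t. 7*m + L8 i ! \<beta> ! t)" by simp
        then show ?thesis using mem2 Hol_in[OF hol b] a_eq by metis
      qed
    qed
  qed
qed

lemma count_ok:
  assumes m: "odd m"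
  shows "7 * card (Iset m hol) \<le> card (complete_sym_arcs {0..<7*m + (if hol then 8 else 0)})"
proof -
  obtain k where k: "m = 2*k + 1" using m oddE by blast
  have "(m - 1) div 2 = k" using k by simp
  then show ?thesis unfolding card_Iset card_csa[OF finite_atLeastLessThan] using k
    by (cases hol) (simp_all add: algebra_simps)
qed

theorem main_decomp:
  fixes m :: nat
  assumes m: "odd m" and i: "i \<in> {1..7}"
  shows "has_D_decomposition i {0..<7*m + (if hol then 8 else 0)}"
  by (rule decomp_family[where I = "Iset m hol" and bm = "bmap i m hol"])
     (use finite_Iset copies[OF m i] coverage[OF m i] count_ok[OF m] in auto)

theorem corollary1p6:
  fixes v :: nat and i :: nat
  assumes "v \<ge> 7"
    and "v mod 14 = 1 \<or> v mod 14 = 7"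
    and "i \<in> {1..7}"
  shows "has_D_decomposition i {0..<v}"
proof -
  define q where "q = v div 14"
  have vq: "v = 14 * q + v mod 14" unfolding q_def by simp
  from assms(2) show ?thesis
  proof
    assume r: "v mod 14 = 1"
    then have q1: "1 \<le> q" using assms(1) vq by (cases q) auto
    have "odd (2 * q - 1)" using q1 by simp
    moreover have "7 * (2 * q - 1) + (if True then 8 else 0) = v" using vq r q1 by simp
    ultimately show ?thesis using main_decomp[of "2*q - 1" i True, OF _ assms(3)] by simp
  next
    assume r: "v mod 14 = 7"
    have "odd (2 * q + 1)" by simp
    moreover have "7 * (2 * q + 1) + (if False then 8 else 0) = v" using vq r by simp
    ultimately show ?thesis using main_decomp[of "2*q + 1" i False, OF _ assms(3)] by simp
  qed
qed
end
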